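(* Suppose $\sigma(z,\bar z)=|z|^{2M-2}$ for a positive integer $M$, so that $U=|z|^{2M}/M^2$. Then $F$, regarded as a function of $t_0,t_k,\bar t_k$, satisfies $$4MF=-t_0^2+2Mt_0\,\partial_{t_0}F+\sum_{k\ge1}(2M-k)\big(t_k\partial_{t_k}F+\bar t_k\partial_{\bar t_k}F\big).$$ That is, $F$ is quasihomogeneous of degree $4M$, up to the term $-t_0^2$.
   Context: Let $\gamma$ be a closed simple analytic curve in $\mathbb C$, $D_+$ its interior (assumed to contain $0$) and $D_-$ its exterior. Define the moments - $t_0=\frac1\pi\int_{D_+}\sigma\,d^2z$, - $t_k=\frac{1}{2\pi i k}\oint_\gamma z^{-k}\partial_zU\,dz$ for $k\ge1$, and assume only finitely many $t_k$ are nonzero, - $v_k=\frac1\pi\int_{D_+}z^k\sigma\,d^2z$, - $v_0=\frac2\pi\int_{D_+}\log|z|\,\sigma\,d^2z$. Standing assumption: near a given curve, $(t_0,t_k,\bar t_k)$ (with $\bar t_k$ treated as independent variables) are local coordinates on the space of analytic curves. Define $F=-\frac{1}{\pi^2}\int\!\int_{D_+}\sigma(z,\bar z)\sigma(z',\bar z')\log|z^{-1}-z'^{-1}|\,d^2z\,d^2z'$. *)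

theory Defs
  imports "HOL-Complex_Analysis.Complex_Analysis"
begin

section \<open>Analytic simple closed curves\<close>

text \<open>Closed annulus around the unit circle.\<close>
definition annulus_cl :: "real \<Rightarrow> complex set" where
  "annulus_cl \<delta> = {z. 1 - \<delta> \<le> norm z \<and> norm z \<le> 1 + \<delta>}"

text \<open>The path gamma on [0,1] is the image of the unit circle under a map f that is
  analytic and univalent on a closed annulus of width delta around the unit circle.\<close>
definition analytic_param :: "real \<Rightarrow> (complex \<Rightarrow> complex) \<Rightarrow> (real \<Rightarrow> complex) \<Rightarrow> bool" where
  "analytic_param \<delta> f \<gamma> \<longleftrightarrow> 0 < \<delta> \<and> \<delta> < 1 \<and> f analytic_on annulus_cl \<delta> \<and>
     inj_on f (annulus_cl \<delta>) \<and> (\<forall>t\<in>{0..1}. \<gamma> t = f (cis (2 * pi * t)))"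

definition analytic_curve :: "(real \<Rightarrow> complex) \<Rightarrow> bool" where
  "analytic_curve \<gamma> \<longleftrightarrow> (\<exists>\<delta> f. analytic_param \<delta> f \<gamma>)"

text \<open>Admissible curves: closed simple analytic curves, positively oriented,
  whose interior D+ contains 0.\<close>
definition adm_curve :: "(real \<Rightarrow> complex) \<Rightarrow> bool" where
  "adm_curve \<gamma> \<longleftrightarrow> analytic_curve \<gamma> \<and> simple_path \<gamma> \<and> pathfinish \<gamma> = pathstart \<gamma> \<and>
     0 \<in> inside (path_image \<gamma>) \<and> winding_number \<gamma> 0 = 1"

text \<open>Interior D+ of the curve.\<close>
definition Dplus :: "(real \<Rightarrow> complex) \<Rightarrow> complex set" where
  "Dplus \<gamma> = inside (path_image \<gamma>)"

section \<open>Moments and free energy\<close>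

text \<open>Wirtinger derivative d/dz of a real-valued function on the plane.\<close>
definition wirt_z :: "(complex \<Rightarrow> real) \<Rightarrow> complex \<Rightarrow> complex" where
  "wirt_z U z = (complex_of_real (frechet_derivative U (at z) 1)
                 - \<i> * complex_of_real (frechet_derivative U (at z) \<i>)) / 2"

definition mom_t0 :: "(complex \<Rightarrow> real) \<Rightarrow> complex set \<Rightarrow> real" where
  "mom_t0 \<sigma> D = (LINT z:D|lborel. \<sigma> z) / pi"

definition mom_t :: "(complex \<Rightarrow> real) \<Rightarrow> (real \<Rightarrow> complex) \<Rightarrow> nat \<Rightarrow> complex" where
  "mom_t U \<gamma> k = contour_integral \<gamma> (\<lambda>z. inverse z ^ k * wirt_z U z) / (2 * pi * \<i> * of_nat k)"

definition free_energy :: "(complex \<Rightarrow> real) \<Rightarrow> complex set \<Rightarrow> real" where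
  "free_energy \<sigma> D = - (LINT z:D|lborel. (LINT w:D|lborel.
       \<sigma> z * \<sigma> w * ln (norm (inverse z - inverse w)))) / pi\<^sup>2"

text \<open>The specific density and potential of the theorem.\<close>
definition sigmaM :: "nat \<Rightarrow> complex \<Rightarrow> real" where
  "sigmaM M z = norm z ^ (2 * M - 2)"

definition UM :: "nat \<Rightarrow> complex \<Rightarrow> real" where
  "UM M z = norm z ^ (2 * M) / (real M)\<^sup>2"

section \<open>Coordinates\<close>

text \<open>Coordinates are (t0, (t_{idx i})_i) in real \<times> complex^'n, where idx enumerates the
  finitely many indices k \<ge> 1 for which t_k may be nonzero; all other t_k vanish.\<close>
definition has_coords ::
  "(complex \<Rightarrow> real) \<Rightarrow> (complex \<Rightarrow> real) \<Rightarrow> ('n::finite \<Rightarrow> nat) \<Rightarrow> (real \<Rightarrow> complex)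
     \<Rightarrow> real \<times> (complex ^ 'n) \<Rightarrow> bool" where
  "has_coords \<sigma> U idx \<gamma> c \<longleftrightarrow>
     mom_t0 \<sigma> (Dplus \<gamma>) = fst c \<and>
     (\<forall>i. mom_t U \<gamma> (idx i) = snd c $ i) \<and>
     (\<forall>k. 1 \<le> k \<longrightarrow> k \<notin> range idx \<longrightarrow> mom_t U \<gamma> k = 0)"

text \<open>Partial derivatives of a real function of the coordinates, given its Frechet
  derivative G': derivative in t0, and Wirtinger derivatives in t_k and conj t_k.\<close>
definition d_t0 :: "(real \<times> (complex ^ 'n) \<Rightarrow> real) \<Rightarrow> real" where
  "d_t0 G' = G' (1, 0)"

definition d_tk :: "(real \<times> (complex ^ 'n) \<Rightarrow> real) \<Rightarrow> 'n::finite \<Rightarrow> complex" where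
  "d_tk G' i = (complex_of_real (G' (0, axis i 1)) - \<i> * complex_of_real (G' (0, axis i \<i>))) / 2"

definition d_tkbar :: "(real \<times> (complex ^ 'n) \<Rightarrow> real) \<Rightarrow> 'n::finite \<Rightarrow> complex" where
  "d_tkbar G' i = (complex_of_real (G' (0, axis i 1)) + \<i> * complex_of_real (G' (0, axis i \<i>))) / 2"

end

theory Submission
  imports Defs
begin

lemma lborel_scale_integral:
  fixes g :: "'a::euclidean_space \<Rightarrow> real" and c :: real
  assumes c: "c > 0" and g[measurable]: "g \<in> borel_measurable borel"
  shows "integral\<^sup>L lborel (\<lambda>x. g (c *\<^sub>R x)) = integral\<^sup>L lborel g / c ^ DIM('a)"
proof -
  have eq: "lborel = density (distr lborel borel (\<lambda>x::'a. 0 + c *\<^sub>R x)) (\<lambda>_. \<bar>c\<bar>^DIM('a))"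
    using c by (intro lborel_affine) auto
  have "integral\<^sup>L lborel g = integral\<^sup>L (density (distr lborel borel (\<lambda>x::'a. 0 + c *\<^sub>R x)) (\<lambda>_. \<bar>c\<bar>^DIM('a))) g"
    by (rule arg_cong[where f="\<lambda>M. integral\<^sup>L M g", OF eq])
  also have "\<dots> = integral\<^sup>L (distr lborel borel (\<lambda>x::'a. 0 + c *\<^sub>R x)) (\<lambda>x. \<bar>c\<bar>^DIM('a) *\<^sub>R g x)"
    using c by (subst integral_density) auto
  also have "\<dots> = integral\<^sup>L lborel (\<lambda>x. \<bar>c\<bar>^DIM('a) *\<^sub>R g (0 + c *\<^sub>R x))"
    by (subst integral_distr) auto
  also have "\<dots> = c^DIM('a) * integral\<^sup>L lborel (\<lambda>x. g (c *\<^sub>R x))"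
    using c by simp
  finally show ?thesis using c by (simp add: field_simps)
qed

lemma ln_abs_le_count:
  fixes r :: real assumes r: "0 < r" "r < 1"
  shows "ennreal \<bar>ln r\<bar> \<le> (\<Sum>i. indicator {..<((1/2)^i)} r :: ennreal)"
proof -
  define m where "m = nat \<lceil>- ln r\<rceil>"
  have lnr: "ln r < 0" using r by simp
  have le: "\<bar>ln r\<bar> \<le> real m" unfolding m_def using lnr by linarith
  have "r < (1/2)^i" if "i < m" for i
  proof -
    have "real i < - ln r" using that lnr unfolding m_def by linarith
    moreover have "real i * ln 2 \<le> real i" using ln_2_less_1 by (simp add: mult_left_le)
    ultimately have "real i * ln 2 < - ln r" by linarith
    hence "ln r < - (real i * ln 2)" by linarith
    hence "exp (ln r) < exp (- (real i * ln 2))" by simp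
    moreover have "exp (- (real i * ln 2)) = (1/2)^i"
      by (simp add: exp_minus exp_of_nat_mult power_one_over inverse_eq_divide)
    ultimately show ?thesis using r by simp
  qed
  hence "(\<Sum>i<m. indicator {..<((1/2)^i)} r :: ennreal) = (\<Sum>i<m. 1)"
    by (intro sum.cong) auto
  hence "ennreal (real m) = (\<Sum>i<m. indicator {..<((1/2)^i)} r :: ennreal)" by (simp add: ennreal_of_nat_eq_real_of_nat)
  also have "\<dots> \<le> (\<Sum>i. indicator {..<((1/2)^i)} r :: ennreal)"
    by (intro sum_le_suminf) auto
  finally show ?thesis using le by (meson ennreal_leI order_trans)
qed

definition psi :: "real \<Rightarrow> complex \<Rightarrow> ennreal" where
  "psi \<rho> v = ennreal \<rho> + (\<Sum>i. indicator (ball 0 ((1/2)^i)) v)"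

lemma psi_bound:
  fixes v :: complex assumes "norm v \<le> \<rho>"
  shows "ennreal \<bar>ln (norm v)\<bar> \<le> psi \<rho> v"
proof (cases "v = 0")
  case True thus ?thesis by simp
next
  case False
  show ?thesis
  proof (cases "norm v < 1")
    case True
    have "ennreal \<bar>ln (norm v)\<bar> \<le> (\<Sum>i. indicator {..<((1/2)^i)} (norm v) :: ennreal)"
      using False True by (intro ln_abs_le_count) auto
    also have "\<dots> = (\<Sum>i. indicator (ball 0 ((1/2)^i)) v)"
      by (intro suminf_cong) (auto simp: indicator_def)
    also have "\<dots> \<le> psi \<rho> v" unfolding psi_def by simp
    finally show ?thesis .
  next
    case nt: False
    have "ln (norm v) \<ge> 0" using nt by simp
    moreover have "ln (norm v) \<le> norm v - 1" using False by (intro ln_le_minus_one) auto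
    ultimately have "\<bar>ln (norm v)\<bar> \<le> \<rho>" using assms by linarith
    hence "ennreal \<bar>ln (norm v)\<bar> \<le> ennreal \<rho>" by (rule ennreal_leI)
    also have "\<dots> \<le> psi \<rho> v" unfolding psi_def by simp
    finally show ?thesis .
  qed
qed

lemma ball_subset_cbox_complex:
  "ball (a::complex) r \<subseteq> cbox (a - of_real r * (1 + \<i>)) (a + of_real r * (1 + \<i>))"
proof
  fix w assume "w \<in> ball a r"
  hence d: "norm (w - a) < r" by (simp add: dist_norm norm_minus_commute)
  have "\<bar>Re (w - a)\<bar> \<le> norm (w - a)" "\<bar>Im (w - a)\<bar> \<le> norm (w - a)"
    by (rule abs_Re_le_cmod, rule abs_Im_le_cmod)
  with d show "w \<in> cbox (a - of_real r * (1 + \<i>)) (a + of_real r * (1 + \<i>))"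
    by (auto simp: cbox_def Basis_complex_def)
qed

lemma emeasure_ball_complex_le:
  assumes "r \<ge> 0"
  shows "emeasure lborel (ball (a::complex) r) \<le> ennreal (4 * r^2)"
proof -
  have "emeasure lborel (ball (a::complex) r) \<le> emeasure lborel (cbox (a - of_real r * (1 + \<i>)) (a + of_real r * (1 + \<i>)))"
    by (intro emeasure_mono ball_subset_cbox_complex) auto
  also have "\<dots> = ennreal (4 * r^2)"
    using assms by (simp add: emeasure_lborel_cbox_eq Basis_complex_def power2_eq_square)
  finally show ?thesis .
qed

lemma pred_ball_meas[measurable (raw)]:
  "f \<in> borel_measurable M \<Longrightarrow> Measurable.pred M (\<lambda>x. f x \<in> ball (c::'a::metric_space) r)"
  by (rule pred_sets2[where N=borel]) auto

lemma psi_measurable[measurable]: "psi \<rho> \<in> borel_measurable borel"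
  unfolding psi_def by measurable

lemma psi_int:
  fixes a :: complex assumes R: "R > 0" and \<rho>: "\<rho> \<ge> 0"
  shows "(\<integral>\<^sup>+w. indicator (ball 0 R) w * psi \<rho> (w - a) \<partial>lborel) \<le> ennreal (\<rho> * (4*R^2) + 16/3)"
proof -
  have "(\<integral>\<^sup>+w. indicator (ball 0 R) w * psi \<rho> (w - a) \<partial>lborel)
      \<le> (\<integral>\<^sup>+w. ennreal \<rho> * indicator (ball 0 R) w + (\<Sum>i. indicator (ball a ((1/2)^i)) w) \<partial>lborel)"
  proof (intro nn_integral_mono)
    fix w :: complex
    have "(\<Sum>i. indicator (ball 0 ((1/2)^i)) (w - a) :: ennreal) = (\<Sum>i. indicator (ball a ((1/2)^i)) w)"
      by (intro suminf_cong) (auto simp: indicator_def dist_norm norm_minus_commute)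
    thus "indicator (ball 0 R) w * psi \<rho> (w - a) \<le> ennreal \<rho> * indicator (ball 0 R) w + (\<Sum>i. indicator (ball a ((1/2)^i)) w)"
      unfolding psi_def by (auto simp: indicator_def distrib_left)
  qed
  also have "\<dots> = ennreal \<rho> * emeasure lborel (ball (0::complex) R) + (\<Sum>i. emeasure lborel (ball a ((1/2)^i)))"
  proof -
    have m1: "(\<lambda>w. ennreal \<rho> * indicator (ball (0::complex) R) w) \<in> borel_measurable lborel" by measurable
    have m2: "(\<lambda>w. (\<Sum>i. indicator (ball a ((1/2)^i)) w :: ennreal)) \<in> borel_measurable lborel" by measurable
    have m3: "\<And>i. (\<lambda>w. indicator (ball a ((1/2)^i)) w :: ennreal) \<in> borel_measurable lborel" by measurable
    show ?thesis
      by (simp add: nn_integral_add[OF m1 m2] nn_integral_suminf[OF m3] nn_integral_cmult_indicator)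
  qed
  also have "\<dots> \<le> ennreal \<rho> * ennreal (4*R^2) + (\<Sum>i. ennreal (4 * ((1/2)^i)^2))"
    using R by (intro add_mono mult_left_mono suminf_le emeasure_ball_complex_le) auto
  also have "(\<Sum>i. ennreal (4 * ((1/2)^i)^2)) = ennreal (\<Sum>i. 4 * (1/4)^i)"
  proof -
    have e: "\<And>i. ((1/2::real)^i)^2 = (1/4)^i" by (simp add: power2_eq_square power_mult_distrib[symmetric])
    show ?thesis unfolding e
      by (rule suminf_ennreal2) (auto intro!: summable_mult summable_geometric)
  qed
  also have "(\<Sum>i. 4 * (1/4::real)^i) = 16/3"
    by (subst suminf_mult) (auto simp: suminf_geometric summable_geometric)
  finally show ?thesis using R \<rho> by (simp add: ennreal_plus[symmetric] ennreal_mult[symmetric] del: ennreal_plus)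
qed

lemma ln_inv_diff_bound:
  fixes z w :: complex
  shows "\<bar>ln (norm (inverse z - inverse w))\<bar> \<le> \<bar>ln (norm (w - z))\<bar> + \<bar>ln (norm z)\<bar> + \<bar>ln (norm w)\<bar>"
proof (cases "z = 0 \<or> w = 0 \<or> z = w")
  case True
  then show ?thesis
    by (auto simp: norm_inverse ln_inverse norm_minus_commute)
next
  case False
  hence z: "z \<noteq> 0" and w: "w \<noteq> 0" and zw: "w - z \<noteq> 0" by auto
  have "inverse z - inverse w = (w - z) / (z * w)" using z w by (simp add: field_simps)
  hence "norm (inverse z - inverse w) = norm (w - z) / (norm z * norm w)" by (simp add: norm_divide norm_mult)
  hence "ln (norm (inverse z - inverse w)) = ln (norm (w - z)) - ln (norm z) - ln (norm w)"
    using z w zw by (simp add: ln_div ln_mult)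
  thus ?thesis by linarith
qed

lemma kern_integrable:
  fixes D :: "complex set" and \<sigma> :: "complex \<Rightarrow> real"
  assumes D: "D \<in> sets borel" "D \<subseteq> ball 0 R" and R: "R > 0"
    and \<sigma>m[measurable]: "\<sigma> \<in> borel_measurable borel" and \<sigma>b: "\<And>z. z \<in> ball 0 R \<Longrightarrow> \<bar>\<sigma> z\<bar> \<le> C"
  shows "integrable lborel (\<lambda>p::complex\<times>complex. indicator D (fst p) * indicator D (snd p) *
            (\<sigma> (fst p) * \<sigma> (snd p) * ln (norm (inverse (fst p) - inverse (snd p)))))"
proof (rule integrableI_bounded)
  have [measurable]: "D \<in> sets borel" using D by simp
  show "(\<lambda>p::complex\<times>complex. indicator D (fst p) * indicator D (snd p) *
            (\<sigma> (fst p) * \<sigma> (snd p) * ln (norm (inverse (fst p) - inverse (snd p))))) \<in> borel_measurable lborel"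
    unfolding lborel_prod[symmetric] by measurable
  define B where "B = ball (0::complex) R"
  define \<rho> where "\<rho> = 2 * R"
  define K where "K = ennreal (\<rho> * (4*R^2) + 16/3)"
  define mB where "mB = emeasure lborel B"
  have C: "C \<ge> 0" using \<sigma>b[of 0] R by auto
  have [measurable]: "B \<in> sets borel" unfolding B_def by simp
  have mB: "mB < \<infinity>" unfolding mB_def B_def by (rule emeasure_lborel_ball_finite)
  have K: "K < \<infinity>" unfolding K_def by simp
  have pint: "(\<integral>\<^sup>+w. indicator B w * psi \<rho> (w - a) \<partial>lborel) \<le> K" for a
    unfolding B_def K_def using R by (intro psi_int) (auto simp: \<rho>_def)
  have pint0: "(\<integral>\<^sup>+w. indicator B w * psi \<rho> w \<partial>lborel) \<le> K"
    using pint[of 0] by simp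
  define G where "G = (\<lambda>(z,w). ennreal (C^2) * (indicator B z * indicator B w *
        (psi \<rho> (w - z) + psi \<rho> z + psi \<rho> w)))"
  have Gm[measurable]: "G \<in> borel_measurable (lborel \<Otimes>\<^sub>M lborel)"
    unfolding G_def by measurable
  have pt: "ennreal (norm (indicator D (fst p) * indicator D (snd p) *
            (\<sigma> (fst p) * \<sigma> (snd p) * ln (norm (inverse (fst p) - inverse (snd p)))))) \<le> G p" for p
  proof (cases p)
    case (Pair z w)
    show ?thesis
    proof (cases "z \<in> D \<and> w \<in> D")
      case False thus ?thesis using Pair by (auto simp: G_def)
    next
      case True
      hence zB: "z \<in> B" and wB: "w \<in> B" using D by (auto simp: B_def)
      hence nz: "norm z < R" and nw: "norm w < R" by (auto simp: B_def)
      have nwz: "norm (w - z) \<le> \<rho>" using nz nw norm_triangle_ineq4[of w z] by (simp add: \<rho>_def)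
      have s1: "\<bar>\<sigma> z\<bar> \<le> C" "\<bar>\<sigma> w\<bar> \<le> C" using zB wB \<sigma>b by (auto simp: B_def)
      have "norm (\<sigma> z * \<sigma> w * ln (norm (inverse z - inverse w)))
          = \<bar>\<sigma> z\<bar> * \<bar>\<sigma> w\<bar> * \<bar>ln (norm (inverse z - inverse w))\<bar>" by (simp add: abs_mult)
      also have "\<dots> \<le> C * C * (\<bar>ln (norm (w - z))\<bar> + \<bar>ln (norm z)\<bar> + \<bar>ln (norm w)\<bar>)"
        using s1 C by (intro mult_mono ln_inv_diff_bound) auto
      finally have "ennreal (norm (\<sigma> z * \<sigma> w * ln (norm (inverse z - inverse w))))
          \<le> ennreal (C^2) * (ennreal \<bar>ln (norm (w - z))\<bar> + ennreal \<bar>ln (norm z)\<bar> + ennreal \<bar>ln (norm w)\<bar>)"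
        using C by (simp add: ennreal_leI power2_eq_square ennreal_mult[symmetric] ennreal_plus[symmetric] del: ennreal_plus)
      also have "\<dots> \<le> ennreal (C^2) * (psi \<rho> (w - z) + psi \<rho> z + psi \<rho> w)"
        using nwz nz nw by (intro mult_left_mono add_mono psi_bound) (use R in \<open>auto simp: \<rho>_def\<close>)
      finally show ?thesis using True Pair zB wB by (simp add: G_def)
    qed
  qed
  have "(\<integral>\<^sup>+p. ennreal (norm (indicator D (fst p) * indicator D (snd p) *
            (\<sigma> (fst p) * \<sigma> (snd p) * ln (norm (inverse (fst p) - inverse (snd p)))))) \<partial>lborel)
        \<le> (\<integral>\<^sup>+p. G p \<partial>lborel)"
    by (intro nn_integral_mono pt)
  also have "\<dots> = (\<integral>\<^sup>+p. G p \<partial>(lborel \<Otimes>\<^sub>M lborel))" by (simp only: lborel_prod)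
  also have "\<dots> = (\<integral>\<^sup>+z. \<integral>\<^sup>+w. G (z, w) \<partial>lborel \<partial>lborel)"
    by (rule lborel.nn_integral_fst[symmetric]) simp
  also have "\<dots> \<le> (\<integral>\<^sup>+z. ennreal (C^2) * (indicator B z * (K + psi \<rho> z * mB + K)) \<partial>lborel)"
  proof (intro nn_integral_mono)
    fix z :: complex
    have "(\<integral>\<^sup>+w. G (z, w) \<partial>lborel) = ennreal (C^2) * (indicator B z *
        ((\<integral>\<^sup>+w. indicator B w * psi \<rho> (w - z) \<partial>lborel) + (\<integral>\<^sup>+w. indicator B w * psi \<rho> z \<partial>lborel)
          + (\<integral>\<^sup>+w. indicator B w * psi \<rho> w \<partial>lborel)))"
      unfolding G_def
      by (simp add: nn_integral_cmult[symmetric] nn_integral_add[symmetric] distrib_left mult.assoc del: nn_integral_cmult_indicator)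
    also have "\<dots> \<le> ennreal (C^2) * (indicator B z * (K + psi \<rho> z * mB + K))"
      using pint[of z] pint0 by (intro mult_left_mono add_mono) (auto simp: nn_integral_multc mB_def mult.commute)
    finally show "(\<integral>\<^sup>+w. G (z, w) \<partial>lborel) \<le> ennreal (C^2) * (indicator B z * (K + psi \<rho> z * mB + K))" .
  qed
  also have "\<dots> = ennreal (C^2) * (K * mB + mB * (\<integral>\<^sup>+z. indicator B z * psi \<rho> z \<partial>lborel) + K * mB)"
  proof -
    have e: "\<And>z. ennreal (C^2) * (indicator B z * (K + psi \<rho> z * mB + K))
       = ennreal (C^2) * ((K * indicator B z + mB * (indicator B z * psi \<rho> z)) + K * indicator B z)"
      by (simp add: algebra_simps)
    have m1: "(\<lambda>z. K * indicator B z) \<in> borel_measurable lborel" by measurable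
    have m2: "(\<lambda>z. mB * (indicator B z * psi \<rho> z)) \<in> borel_measurable lborel" by measurable
    have m3: "(\<lambda>z. K * indicator B z + mB * (indicator B z * psi \<rho> z)) \<in> borel_measurable lborel" by measurable
    have m4: "(\<lambda>z. K * indicator B z + mB * (indicator B z * psi \<rho> z) + K * indicator B z) \<in> borel_measurable lborel" by measurable
    have m5: "(\<lambda>z. indicator B z * psi \<rho> z) \<in> borel_measurable lborel" by measurable
    have i1: "(\<integral>\<^sup>+z. K * indicator B z \<partial>lborel) = K * mB" unfolding mB_def by (simp add: nn_integral_cmult_indicator)
    show ?thesis unfolding e
      by (simp only: nn_integral_cmult[OF m4] nn_integral_add[OF m3 m1] nn_integral_add[OF m1 m2] i1 nn_integral_cmult[OF m5])
  qed
  also have "\<dots> \<le> ennreal (C^2) * (K * mB + mB * K + K * mB)"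
    using pint0 by (intro mult_left_mono add_mono) auto
  also have "\<dots> < \<infinity>" using K mB by (simp add: ennreal_mult_less_top)
  finally show "(\<integral>\<^sup>+p. ennreal (norm (indicator D (fst p) * indicator D (snd p) *
            (\<sigma> (fst p) * \<sigma> (snd p) * ln (norm (inverse (fst p) - inverse (snd p)))))) \<partial>lborel) < \<infinity>" .
qed

definition fK :: "(complex \<Rightarrow> real) \<Rightarrow> complex set \<Rightarrow> complex \<times> complex \<Rightarrow> real" where
  "fK \<sigma> A p = indicator A (fst p) * indicator A (snd p) *
            (\<sigma> (fst p) * \<sigma> (snd p) * ln (norm (inverse (fst p) - inverse (snd p))))"

definition hK :: "(complex \<Rightarrow> real) \<Rightarrow> complex set \<Rightarrow> complex \<times> complex \<Rightarrow> real" where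
  "hK \<sigma> A p = indicator A (fst p) * indicator A (snd p) * (\<sigma> (fst p) * \<sigma> (snd p))"

lemma FE_fubini:
  assumes "integrable lborel (fK \<sigma> A)"
  shows "free_energy \<sigma> A = - integral\<^sup>L lborel (fK \<sigma> A) / pi\<^sup>2"
proof -
  have i: "integrable (lborel \<Otimes>\<^sub>M lborel) (fK \<sigma> A)" using assms by (simp only: lborel_prod)
  have "(LINT z:A|lborel. (LINT w:A|lborel. \<sigma> z * \<sigma> w * ln (norm (inverse z - inverse w))))
      = (\<integral>z. (\<integral>w. fK \<sigma> A (z, w) \<partial>lborel) \<partial>lborel)"
    unfolding set_lebesgue_integral_def fK_def
    by (intro Bochner_Integration.integral_cong refl) (simp add: mult.assoc)
  also have "\<dots> = integral\<^sup>L (lborel \<Otimes>\<^sub>M lborel) (fK \<sigma> A)"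
    by (rule lborel_pair.integral_fst'[OF i])
  also have "\<dots> = integral\<^sup>L lborel (fK \<sigma> A)" by (simp only: lborel_prod)
  finally show ?thesis unfolding free_energy_def by simp
qed

lemma sigmaM_scale: "c \<ge> 0 \<Longrightarrow> sigmaM M (c *\<^sub>R z) = c^(2*M-2) * sigmaM M z"
  by (simp add: sigmaM_def power_mult_distrib)

lemma sigmaM_meas[measurable]: "sigmaM M \<in> borel_measurable borel"
  unfolding sigmaM_def by measurable

lemma sigmaM_bound: "z \<in> ball 0 R \<Longrightarrow> \<bar>sigmaM M z\<bar> \<le> R^(2*M-2)"
  by (simp add: sigmaM_def power_mono)

lemma fK_meas: assumes [measurable]: "A \<in> sets borel" "\<sigma> \<in> borel_measurable borel" shows "fK \<sigma> A \<in> borel_measurable lborel"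
  unfolding fK_def lborel_prod[symmetric] by measurable

lemma hK_meas: assumes [measurable]: "A \<in> sets borel" "\<sigma> \<in> borel_measurable borel" shows "hK \<sigma> A \<in> borel_measurable lborel"
  unfolding hK_def lborel_prod[symmetric] by measurable

lemma fK_integrable_sigmaM:
  assumes "open A" "bounded A"
  shows "integrable lborel (fK (sigmaM M) A)"
proof -
  obtain R where R: "R > 0" "A \<subseteq> ball 0 R"
    using bounded_subset_ballD[OF assms(2), of 0] by auto
  show ?thesis unfolding fK_def
    by (rule kern_integrable[OF _ R(2) R(1) sigmaM_meas sigmaM_bound]) (use assms in auto)
qed

lemma hK_integrable_sigmaM:
  assumes "open A" "bounded A"
  shows "integrable lborel (hK (sigmaM M) A)"
proof -
  obtain R where R: "R > 0" "A \<subseteq> ball 0 R"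
    using bounded_subset_ballD[OF assms(2), of 0] by auto
  have b: "bounded (A \<times> A)" using assms by (simp add: bounded_Times)
  show ?thesis
  proof (rule integrableI_bounded_set[where A="A \<times> A" and B="R^(2*M-2) * R^(2*M-2)"])
    show "A \<times> A \<in> sets lborel" using assms by (simp add: open_Times)
    show "hK (sigmaM M) A \<in> borel_measurable lborel" using assms by (intro hK_meas) auto
    show "emeasure lborel (A \<times> A) < \<infinity>" by (rule emeasure_bounded_finite[OF b])
    show "AE x in lborel. x \<in> A \<times> A \<longrightarrow> norm (hK (sigmaM M) A x) \<le> R^(2*M-2) * R^(2*M-2)"
    proof (intro AE_I2 impI)
      fix x assume "x \<in> A \<times> A"
      hence "fst x \<in> ball 0 R" "snd x \<in> ball 0 R" using R(2) by auto
      thus "norm (hK (sigmaM M) A x) \<le> R^(2*M-2) * R^(2*M-2)"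
        using R(1) by (auto simp: hK_def abs_mult intro!: mult_mono sigmaM_bound split: split_indicator)
    qed
    show "AE x in lborel. x \<notin> A \<times> A \<longrightarrow> hK (sigmaM M) A x = 0"
      by (auto simp: hK_def split: split_indicator)
  qed
qed

lemma hK_integral:
  assumes "open A" "bounded A"
  shows "integral\<^sup>L lborel (hK (sigmaM M) A) = (LINT z:A|lborel. sigmaM M z)^2"
proof -
  have i: "integrable (lborel \<Otimes>\<^sub>M lborel) (hK (sigmaM M) A)"
    using hK_integrable_sigmaM[OF assms] by (simp only: lborel_prod)
  have "integral\<^sup>L lborel (hK (sigmaM M) A) = integral\<^sup>L (lborel \<Otimes>\<^sub>M lborel) (hK (sigmaM M) A)"
    by (simp only: lborel_prod)
  also have "\<dots> = (\<integral>z. (\<integral>w. hK (sigmaM M) A (z, w) \<partial>lborel) \<partial>lborel)"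
    by (rule lborel_pair.integral_fst'[OF i, symmetric])
  also have "\<dots> = (\<integral>z. indicator A z * sigmaM M z * (LINT w:A|lborel. sigmaM M w) \<partial>lborel)"
  proof -
    have e: "\<And>x w. indicator A x * indicator A w * (sigmaM M x * sigmaM M w) = (indicator A x * sigmaM M x) * (indicator A w * sigmaM M w)" by simp
    show ?thesis unfolding set_lebesgue_integral_def hK_def
      by (intro Bochner_Integration.integral_cong refl) (simp only: fst_conv snd_conv e integral_mult_right_zero real_scaleR_def)
  qed
  also have "\<dots> = (LINT z:A|lborel. sigmaM M z)^2"
    unfolding set_lebesgue_integral_def by (simp add: power2_eq_square mult.commute)
  finally show ?thesis .
qed

lemma AE_offdiag: "AE p in (lborel :: (complex \<times> complex) measure). fst p \<noteq> snd p"
proof -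
  have "AE p in lborel \<Otimes>\<^sub>M (lborel :: complex measure). fst p \<noteq> snd p"
  proof (rule lborel_pair.AE_pair_measure)
    have o: "open {p::complex\<times>complex. fst p \<noteq> snd p}"
      by (intro open_Collect_neq continuous_intros)
    have "{p::complex\<times>complex. fst p \<noteq> snd p} \<in> sets (lborel \<Otimes>\<^sub>M lborel)"
      unfolding lborel_prod using o by simp
    thus "{x \<in> space (lborel \<Otimes>\<^sub>M (lborel :: complex measure)). fst x \<noteq> snd x} \<in> sets (lborel \<Otimes>\<^sub>M lborel)"
      by (simp add: space_pair_measure)
  next
    show "AE x in lborel. AE y in lborel. fst (x, y) \<noteq> snd (x::complex, y::complex)"
    proof (rule AE_I2)
      fix x :: complex
      have "AE y in lborel. y \<noteq> x" by (rule AE_lborel_singleton)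
      thus "AE y in lborel. fst (x, y) \<noteq> snd (x, y)" by eventually_elim auto
    qed
  qed
  thus ?thesis by (simp only: lborel_prod)
qed

lemma ln_norm_inv_scale:
  fixes z w :: complex assumes c: "c > 0" and zw: "z \<noteq> w"
  shows "ln (norm (inverse (c *\<^sub>R z) - inverse (c *\<^sub>R w))) = ln (norm (inverse z - inverse w)) - ln c"
proof -
  have "inverse (c *\<^sub>R z) - inverse (c *\<^sub>R w) = inverse c *\<^sub>R (inverse z - inverse w)"
    by (simp add: inverse_scaleR_distrib scaleR_diff_right)
  hence "norm (inverse (c *\<^sub>R z) - inverse (c *\<^sub>R w)) = inverse c * norm (inverse z - inverse w)"
    using c by simp
  moreover have "norm (inverse z - inverse w) > 0" using zw by simp
  ultimately show ?thesis using c by (simp add: ln_mult ln_inverse)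
qed

lemma indicator_scale_image:
  fixes z :: "'a::real_vector"
  assumes "c \<noteq> 0"
  shows "indicator ((\<lambda>x. c *\<^sub>R x) ` A) (c *\<^sub>R z) = (indicator A z :: real)"
proof -
  have "inj (\<lambda>x::'a. c *\<^sub>R x)" using assms by (auto simp: inj_on_def)
  hence "c *\<^sub>R z \<in> (\<lambda>x. c *\<^sub>R x) ` A \<longleftrightarrow> z \<in> A" by (rule inj_image_mem_iff)
  thus ?thesis by (simp add: indicator_def)
qed

lemma FE_scale:
  assumes A: "open A" "bounded A" and c: "c > 0" and M: "M \<ge> 1"
  shows "free_energy (sigmaM M) ((\<lambda>x. c *\<^sub>R x) ` A) =
           c^(4*M) * (free_energy (sigmaM M) A + ln c * (mom_t0 (sigmaM M) A)^2)"
proof -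
  define cA where "cA = (\<lambda>x. c *\<^sub>R x) ` A"
  have cAo: "open cA" "bounded cA" unfolding cA_def using A c by (auto intro: bounded_scaling)
  define \<sigma> where "\<sigma> = sigmaM M"
  define I where "I = integral\<^sup>L lborel (fK \<sigma> A)"
  define S where "S = (LINT z:A|lborel. \<sigma> z)"
  have iA: "integrable lborel (fK \<sigma> A)" unfolding \<sigma>_def by (rule fK_integrable_sigmaM[OF A])
  have icA: "integrable lborel (fK \<sigma> cA)" unfolding \<sigma>_def by (rule fK_integrable_sigmaM[OF cAo])
  have ihA: "integrable lborel (hK \<sigma> A)" unfolding \<sigma>_def by (rule hK_integrable_sigmaM[OF A])
  have hI: "integral\<^sup>L lborel (hK \<sigma> A) = S^2" unfolding \<sigma>_def S_def by (rule hK_integral[OF A])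
  have mcA: "fK \<sigma> cA \<in> borel_measurable borel"
    using fK_meas[of cA \<sigma>] cAo unfolding \<sigma>_def by simp
  have "integral\<^sup>L lborel (\<lambda>p. fK \<sigma> cA (c *\<^sub>R p)) = integral\<^sup>L lborel (fK \<sigma> cA) / c^DIM(complex \<times> complex)"
    by (rule lborel_scale_integral[OF c mcA])
  hence e1: "integral\<^sup>L lborel (fK \<sigma> cA) = c^4 * integral\<^sup>L lborel (\<lambda>p. fK \<sigma> cA (c *\<^sub>R p))"
    using c by (simp add: field_simps)
  have "AE p in lborel. fK \<sigma> cA (c *\<^sub>R p) = (c^(2*M-2))^2 * (fK \<sigma> A p - ln c * hK \<sigma> A p)"
    using AE_offdiag
  proof eventually_elim
    case (elim p)
    obtain z w where p: "p = (z, w)" by (cases p)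
    have zw: "z \<noteq> w" using elim p by simp
    show ?case
      using c zw
      by (simp add: p fK_def hK_def \<sigma>_def cA_def indicator_scale_image sigmaM_scale ln_norm_inv_scale
          power2_eq_square algebra_simps)
  qed
  hence "integral\<^sup>L lborel (\<lambda>p. fK \<sigma> cA (c *\<^sub>R p)) = integral\<^sup>L lborel (\<lambda>p. (c^(2*M-2))^2 * (fK \<sigma> A p - ln c * hK \<sigma> A p))"
  proof (rule integral_cong_AE[rotated 2])
    have [measurable]: "fK \<sigma> A \<in> borel_measurable borel" "hK \<sigma> A \<in> borel_measurable borel"
      "fK \<sigma> cA \<in> borel_measurable borel"
      using fK_meas[of A \<sigma>] hK_meas[of A \<sigma>] A mcA by (auto simp: \<sigma>_def)
    show "(\<lambda>p. fK \<sigma> cA (c *\<^sub>R p)) \<in> borel_measurable lborel" by measurable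
    show "(\<lambda>p. (c^(2*M-2))^2 * (fK \<sigma> A p - ln c * hK \<sigma> A p)) \<in> borel_measurable lborel" by measurable
  qed
  also have "\<dots> = (c^(2*M-2))^2 * (I - ln c * S^2)"
    using iA ihA hI by (simp add: I_def)
  finally have e2: "integral\<^sup>L lborel (fK \<sigma> cA) = c^4 * (c^(2*M-2))^2 * (I - ln c * S^2)"
    using e1 by simp
  have pw: "c^4 * (c^(2*M-2))^2 = c^(4*M)"
  proof -
    have ex: "4 + (2*M-2)*2 = 4*M" using M by linarith
    show ?thesis by (simp add: power_mult[symmetric] power_add[symmetric] ex)
  qed
  have "free_energy \<sigma> cA = - integral\<^sup>L lborel (fK \<sigma> cA) / pi\<^sup>2" by (rule FE_fubini[OF icA])
  also have "\<dots> = c^(4*M) * (- I / pi\<^sup>2 + ln c * (S / pi)^2)"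
    unfolding e2 pw by (simp add: field_simps power2_eq_square)
  also have "- I / pi\<^sup>2 = free_energy \<sigma> A" unfolding I_def by (rule FE_fubini[OF iA, symmetric])
  also have "S / pi = mom_t0 \<sigma> A" unfolding S_def mom_t0_def by simp
  finally show ?thesis unfolding cA_def \<sigma>_def .
qed

lemma ccs_scale_sub:
  fixes S :: "complex set" assumes c: "c \<noteq> 0"
  shows "(\<lambda>x. c *\<^sub>R x) ` connected_component_set (-S) x
         \<subseteq> connected_component_set (- ((\<lambda>x. c *\<^sub>R x) ` S)) (c *\<^sub>R x)"
proof (cases "x \<in> S")
  case True
  hence "connected_component_set (-S) x = {}" using connected_component_eq_empty[of "-S" x] by simp
  thus ?thesis by (simp only: image_empty empty_subsetI)
next
  case False
  show ?thesis
  proof (rule connected_component_maximal)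
    show "c *\<^sub>R x \<in> (\<lambda>x. c *\<^sub>R x) ` connected_component_set (- S) x"
      using False by (auto intro: connected_component_refl)
    show "connected ((\<lambda>x. c *\<^sub>R x) ` connected_component_set (- S) x)"
      by (intro connected_continuous_image continuous_intros) auto
    show "(\<lambda>x. c *\<^sub>R x) ` connected_component_set (- S) x \<subseteq> - (\<lambda>x. c *\<^sub>R x) ` S"
      using connected_component_subset[of "-S" x] c by auto
  qed
qed

lemma ccs_scale:
  fixes S :: "complex set" assumes c: "c \<noteq> 0"
  shows "connected_component_set (- ((\<lambda>x. c *\<^sub>R x) ` S)) (c *\<^sub>R x)
       = (\<lambda>x. c *\<^sub>R x) ` connected_component_set (-S) x"
proof
  show "(\<lambda>x. c *\<^sub>R x) ` connected_component_set (-S) x \<subseteq> connected_component_set (- ((\<lambda>x. c *\<^sub>R x) ` S)) (c *\<^sub>R x)"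
    by (rule ccs_scale_sub[OF c])
  have ic: "inverse c \<noteq> 0" using c by simp
  have e1: "(\<lambda>x. inverse c *\<^sub>R x) ` (\<lambda>x. c *\<^sub>R x) ` S = S"
    using c by (auto simp: image_image image_iff)
  have "(\<lambda>x. inverse c *\<^sub>R x) ` connected_component_set (- ((\<lambda>x. c *\<^sub>R x) ` S)) (c *\<^sub>R x)
      \<subseteq> connected_component_set (-S) x"
    using ccs_scale_sub[OF ic, of "(\<lambda>x. c *\<^sub>R x) ` S" "c *\<^sub>R x"] c by (simp add: e1)
  hence "(\<lambda>x. c *\<^sub>R x) ` (\<lambda>x. inverse c *\<^sub>R x) ` connected_component_set (- ((\<lambda>x. c *\<^sub>R x) ` S)) (c *\<^sub>R x)
      \<subseteq> (\<lambda>x. c *\<^sub>R x) ` connected_component_set (-S) x" by (rule image_mono)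
  thus "connected_component_set (- ((\<lambda>x. c *\<^sub>R x) ` S)) (c *\<^sub>R x) \<subseteq> (\<lambda>x. c *\<^sub>R x) ` connected_component_set (-S) x"
    using c by (simp add: image_image)
qed

lemma inside_scale:
  fixes S :: "complex set" assumes c: "c \<noteq> 0"
  shows "inside ((\<lambda>x. c *\<^sub>R x) ` S) = (\<lambda>x. c *\<^sub>R x) ` inside S"
proof
  show "(\<lambda>x. c *\<^sub>R x) ` inside S \<subseteq> inside ((\<lambda>x. c *\<^sub>R x) ` S)"
  proof
    fix y assume "y \<in> (\<lambda>x. c *\<^sub>R x) ` inside S"
    then obtain x where y: "y = c *\<^sub>R x" and x: "x \<in> inside S" by auto
    have "x \<notin> S" "bounded (connected_component_set (-S) x)" using x by (auto simp: inside_def)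
    thus "y \<in> inside ((\<lambda>x. c *\<^sub>R x) ` S)"
      using c by (auto simp: inside_def y ccs_scale bounded_scaling)
  qed
  show "inside ((\<lambda>x. c *\<^sub>R x) ` S) \<subseteq> (\<lambda>x. c *\<^sub>R x) ` inside S"
  proof
    fix y assume y: "y \<in> inside ((\<lambda>x. c *\<^sub>R x) ` S)"
    define x where "x = inverse c *\<^sub>R y"
    have yx: "y = c *\<^sub>R x" using c by (simp add: x_def)
    have "c *\<^sub>R x \<notin> (\<lambda>x. c *\<^sub>R x) ` S" "bounded ((\<lambda>x. c *\<^sub>R x) ` connected_component_set (-S) x)"
      using y c by (auto simp: inside_def yx ccs_scale)
    hence "x \<notin> S" "bounded ((\<lambda>x. inverse c *\<^sub>R x) ` (\<lambda>x. c *\<^sub>R x) ` connected_component_set (-S) x)"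
      by (auto intro: bounded_scaling)
    hence "x \<in> inside S" using c by (simp add: inside_def image_image)
    thus "y \<in> (\<lambda>x. c *\<^sub>R x) ` inside S" using yx by auto
  qed
qed

lemma path_image_scale: "path_image (\<lambda>t. c *\<^sub>R \<gamma> t) = (\<lambda>x. c *\<^sub>R x) ` path_image \<gamma>"
  by (auto simp: path_image_def)

lemma Dplus_scale: "c \<noteq> 0 \<Longrightarrow> Dplus (\<lambda>t. c *\<^sub>R \<gamma> t) = (\<lambda>x. c *\<^sub>R x) ` Dplus \<gamma>"
  by (simp add: Dplus_def path_image_scale inside_scale)

lemma analytic_param_scale:
  assumes "analytic_param \<delta> f \<gamma>" "c \<noteq> 0"
  shows "analytic_param \<delta> (\<lambda>z. c *\<^sub>R f z) (\<lambda>t. c *\<^sub>R \<gamma> t)"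
  using assms unfolding analytic_param_def
  by (auto simp: scaleR_conv_of_real inj_on_def intro!: analytic_intros)

lemma adm_curve_scale:
  assumes adm: "adm_curve \<gamma>" and c: "c > 0"
  shows "adm_curve (\<lambda>t. c *\<^sub>R \<gamma> t)"
proof -
  from adm obtain \<delta> f where ap: "analytic_param \<delta> f \<gamma>"
    unfolding adm_curve_def analytic_curve_def by blast
  have sp: "simple_path \<gamma>" and loop: "pathfinish \<gamma> = pathstart \<gamma>"
    and ins: "0 \<in> inside (path_image \<gamma>)" and wn: "winding_number \<gamma> 0 = 1"
    using adm by (auto simp: adm_curve_def)
  have lin: "linear (\<lambda>x::complex. c *\<^sub>R x)" by (simp add: linear_scaleR)
  have inj: "inj (\<lambda>x::complex. c *\<^sub>R x)" using c by (auto simp: inj_on_def)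
  have sp': "simple_path (\<lambda>t. c *\<^sub>R \<gamma> t)"
    using simple_path_linear_image_eq[OF lin inj, of \<gamma>] sp by (simp add: o_def)
  have loop': "pathfinish (\<lambda>t. c *\<^sub>R \<gamma> t) = pathstart (\<lambda>t. c *\<^sub>R \<gamma> t)"
    using loop by (simp add: pathfinish_def pathstart_def)
  have ins': "0 \<in> inside (path_image (\<lambda>t. c *\<^sub>R \<gamma> t))"
    using ins c by (simp add: path_image_scale inside_scale image_iff)
  have p: "path \<gamma>" using sp by (rule simple_path_imp_path)
  have p': "path (\<lambda>t. c *\<^sub>R \<gamma> t)" using sp' by (rule simple_path_imp_path)
  have n0: "0 \<notin> path_image \<gamma>" using ins inside_no_overlap by blast
  have "winding_number (\<lambda>t. c *\<^sub>R \<gamma> t) 0 = winding_number \<gamma> 0"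
  proof (rule winding_number_loops_linear_eq[OF p p' loop loop'])
    fix t :: real assume t: "t \<in> {0..1}"
    have g: "\<gamma> t \<noteq> 0" using n0 t by (auto simp: path_image_def)
    show "0 \<notin> closed_segment (\<gamma> t) (c *\<^sub>R \<gamma> t)"
    proof
      assume "0 \<in> closed_segment (\<gamma> t) (c *\<^sub>R \<gamma> t)"
      then obtain u :: real where u: "0 \<le> u" "u \<le> 1" and e: "0 = (1 - u) *\<^sub>R \<gamma> t + u *\<^sub>R (c *\<^sub>R \<gamma> t)"
        by (auto simp: closed_segment_def)
      hence "0 = ((1 - u) + u * c) *\<^sub>R \<gamma> t" by (simp add: scaleR_add_left)
      moreover have "(1 - u) + u * c > 0"
      proof (cases "u = 1")
        case True thus ?thesis using c by simp
      next
        case False thus ?thesis using u c by (smt (verit) mult_nonneg_nonneg)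
      qed
      ultimately show False using g by simp
    qed
  qed
  thus ?thesis
    using sp' loop' ins' wn analytic_param_scale[OF ap, of c] c
    unfolding adm_curve_def analytic_curve_def by auto
qed

lemma UM_inner: "UM M = (\<lambda>z. (z \<bullet> z)^M * inverse ((real M)^2))"
  by (rule ext) (simp add: UM_def power2_norm_eq_inner[symmetric] power_mult divide_inverse)

lemma UM_deriv:
  "(UM M has_derivative (\<lambda>h. real M * (2 * (z \<bullet> h)) * (z \<bullet> z)^(M-1) * inverse ((real M)^2))) (at z)"
  unfolding UM_inner
  by (auto intro!: derivative_eq_intros simp: inner_commute)

lemma wirt_UM:
  assumes M: "M \<ge> 1"
  shows "wirt_z (UM M) z = complex_of_real (norm z ^ (2*M-2) / real M) * cnj z"
proof -
  have fd: "frechet_derivative (UM M) (at z) = (\<lambda>h. real M * (2 * (z \<bullet> h)) * (z \<bullet> z)^(M-1) * inverse ((real M)^2))"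
    using frechet_derivative_at[OF UM_deriv] by simp
  have zz: "(z \<bullet> z)^(M-1) = norm z ^ (2*M-2)"
    using M by (simp add: power2_norm_eq_inner[symmetric] power_mult[symmetric] mult_2_right[symmetric] diff_mult_distrib2)
  have "wirt_z (UM M) z = complex_of_real (2 * norm z ^ (2*M-2) / real M) * (complex_of_real (Re z) - \<i> * complex_of_real (Im z)) / 2"
    unfolding wirt_z_def fd zz using M
    by (simp add: inner_complex_def power2_eq_square field_simps)
  also have "complex_of_real (Re z) - \<i> * complex_of_real (Im z) = cnj z"
    by (simp add: complex_eq_iff)
  finally show ?thesis by simp
qed

lemma cis_diff: "(\<lambda>s::real. cis (2 * pi * s)) differentiable (at t)"
proof -
  have e: "(\<lambda>s::real. cis (2 * pi * s)) = (\<lambda>s. (\<lambda>w. exp (\<i> * (2 * pi) * w)) (complex_of_real s))"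
    by (rule ext) (simp add: cis_conv_exp mult.assoc)
  have "((\<lambda>w. exp (\<i> * (2 * pi) * w)) has_field_derivative (\<i> * (2 * pi) * exp (\<i> * (2 * pi) * complex_of_real t))) (at (complex_of_real t))"
    by (auto intro!: derivative_eq_intros)
  hence "((\<lambda>s. (\<lambda>w. exp (\<i> * (2 * pi) * w)) (complex_of_real s)) has_vector_derivative (\<i> * (2 * pi) * exp (\<i> * (2 * pi) * complex_of_real t))) (at t)"
    by (rule has_vector_derivative_real_field)
  thus ?thesis unfolding e by (rule differentiableI_vector)
qed

lemma analytic_param_diff:
  assumes ap: "analytic_param \<delta> f \<gamma>" and t: "t \<in> {0..1}"
  shows "\<gamma> differentiable (at t within {0..1})"
proof -
  have d: "0 < \<delta>" "\<delta> < 1" and an: "f analytic_on annulus_cl \<delta>"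
    and eq: "\<forall>t\<in>{0..1}. \<gamma> t = f (cis (2 * pi * t))"
    using ap by (auto simp: analytic_param_def)
  obtain T where T: "open T" "annulus_cl \<delta> \<subseteq> T" "f holomorphic_on T"
    using an analytic_on_holomorphic by blast
  have "cis (2 * pi * t) \<in> annulus_cl \<delta>" using d by (simp add: annulus_cl_def)
  hence "f field_differentiable (at (cis (2 * pi * t)))"
    using T by (intro holomorphic_on_imp_differentiable_at[of f T]) auto
  hence "f differentiable (at (cis (2 * pi * t)))" by (rule field_differentiable_imp_differentiable)
  hence "(f \<circ> (\<lambda>s. cis (2 * pi * s))) differentiable (at t)"
    by (intro differentiable_chain_at cis_diff)
  then obtain D where D: "((f \<circ> (\<lambda>s. cis (2 * pi * s))) has_derivative D) (at t within {0..1})"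
    unfolding differentiable_def using has_derivative_at_withinI by blast
  have "(\<gamma> has_derivative D) (at t within {0..1})"
    by (rule has_derivative_transform_within[OF D zero_less_one t]) (use eq in auto)
  thus ?thesis unfolding differentiable_def by blast
qed

lemma contour_integral_scale:
  fixes f :: "complex \<Rightarrow> complex"
  assumes c: "c \<noteq> 0" and dif: "\<And>t. t \<in> {0..1} \<Longrightarrow> \<gamma> differentiable (at t within {0..1})"
    and hom: "\<And>z. f (c *\<^sub>R z) * complex_of_real c = \<mu> * f z" and \<mu>: "\<mu> \<noteq> 0"
  shows "contour_integral (\<lambda>t. c *\<^sub>R \<gamma> t) f = \<mu> * contour_integral \<gamma> f"
proof -
  have vd: "vector_derivative (\<lambda>t. c *\<^sub>R \<gamma> t) (at x within {0..1}) = c *\<^sub>R vector_derivative \<gamma> (at x within {0..1})"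
    if x: "x \<in> {0..1}" for x
  proof -
    have h: "(\<gamma> has_vector_derivative vector_derivative \<gamma> (at x within {0..1})) (at x within {0..1})"
      using dif[OF x] by (simp add: vector_derivative_works)
    have "((\<lambda>t. c *\<^sub>R \<gamma> t) has_vector_derivative c *\<^sub>R vector_derivative \<gamma> (at x within {0..1})) (at x within {0..1})"
      using has_vector_derivative_scaleR[OF DERIV_const[of c] h] by simp
    thus ?thesis using x vector_derivative_within_cbox[of 0 1 x] by (simp add: cbox_interval)
  qed
  have key: "\<And>i. (f has_contour_integral i) (\<lambda>t. c *\<^sub>R \<gamma> t) \<longleftrightarrow> (f has_contour_integral (i / \<mu>)) \<gamma>"
  proof -
    fix i
    have "(f has_contour_integral i) (\<lambda>t. c *\<^sub>R \<gamma> t) \<longleftrightarrow>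
          ((\<lambda>x. \<mu> * (f (\<gamma> x) * vector_derivative \<gamma> (at x within {0..1}))) has_integral i) {0..1}"
      unfolding has_contour_integral_def
    proof (rule has_integral_cong)
      fix x :: real assume x: "x \<in> {0..1}"
      have "f (c *\<^sub>R \<gamma> x) * (c *\<^sub>R vector_derivative \<gamma> (at x within {0..1}))
          = (f (c *\<^sub>R \<gamma> x) * complex_of_real c) * vector_derivative \<gamma> (at x within {0..1})"
        by (simp add: scaleR_conv_of_real mult_ac)
      also have "\<dots> = \<mu> * (f (\<gamma> x) * vector_derivative \<gamma> (at x within {0..1}))"
        by (simp only: hom mult.assoc)
      finally show "f (c *\<^sub>R \<gamma> x) * vector_derivative (\<lambda>t. c *\<^sub>R \<gamma> t) (at x within {0..1})
          = \<mu> * (f (\<gamma> x) * vector_derivative \<gamma> (at x within {0..1}))"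
        using vd[OF x] by simp
    qed
    also have "\<dots> \<longleftrightarrow> (f has_contour_integral (i / \<mu>)) \<gamma>"
      unfolding has_contour_integral_def by (rule has_integral_mult_right_iff[OF \<mu>])
    finally show "(f has_contour_integral i) (\<lambda>t. c *\<^sub>R \<gamma> t) \<longleftrightarrow> (f has_contour_integral (i / \<mu>)) \<gamma>" .
  qed
  show ?thesis
  proof (cases "f contour_integrable_on \<gamma>")
    case True
    then obtain I where I: "(f has_contour_integral I) \<gamma>" by (auto simp: contour_integrable_on_def)
    have "(f has_contour_integral (\<mu> * I)) (\<lambda>t. c *\<^sub>R \<gamma> t)" using key I \<mu> by simp
    thus ?thesis using I by (simp add: contour_integral_unique)
  next
    case False
    have "\<not> f contour_integrable_on (\<lambda>t. c *\<^sub>R \<gamma> t)"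
      using False key by (auto simp: contour_integrable_on_def)
    thus ?thesis using False by (simp add: not_integrable_contour_integral)
  qed
qed

lemma adm_Dplus: assumes "adm_curve \<gamma>" shows "open (Dplus \<gamma>)" "bounded (Dplus \<gamma>)"
proof -
  have "path \<gamma>" using assms by (auto simp: adm_curve_def intro: simple_path_imp_path)
  hence "compact (path_image \<gamma>)" by (rule compact_path_image)
  thus "open (Dplus \<gamma>)" "bounded (Dplus \<gamma>)"
    unfolding Dplus_def by (auto intro!: open_inside compact_imp_closed bounded_inside[OF compact_imp_bounded])
qed

lemma mom_t0_scale:
  assumes A: "A \<in> sets borel" and c: "c > 0" and M: "M \<ge> 1"
  shows "mom_t0 (sigmaM M) ((\<lambda>x. c *\<^sub>R x) ` A) = c^(2*M) * mom_t0 (sigmaM M) A"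
proof -
  define cA where "cA = (\<lambda>x. c *\<^sub>R x) ` A"
  have cA: "cA \<in> sets borel"
  proof -
    have "cA = (\<lambda>x. inverse c *\<^sub>R x) -` A"
    proof (rule set_eqI)
      fix x :: complex
      show "x \<in> cA \<longleftrightarrow> x \<in> (\<lambda>x. inverse c *\<^sub>R x) -` A"
      proof
        assume "x \<in> cA" then obtain a where "a\<in>A" "x = c *\<^sub>R a" by (auto simp: cA_def)
        thus "x \<in> (\<lambda>x. inverse c *\<^sub>R x) -` A" using c by simp
      next
        assume h: "x \<in> (\<lambda>x. inverse c *\<^sub>R x) -` A"
        have "x = c *\<^sub>R (inverse c *\<^sub>R x)" using c by simp
        thus "x \<in> cA" using h unfolding cA_def by blast
      qed
    qed
    also have "\<dots> \<in> sets borel"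
      using A by (intro measurable_sets_borel[OF _ A]) auto
    finally show ?thesis .
  qed
  define g where "g = (\<lambda>z::complex. indicator cA z *\<^sub>R sigmaM M z)"
  have gm: "g \<in> borel_measurable borel" unfolding g_def using cA by measurable
  have "integral\<^sup>L lborel (\<lambda>z. g (c *\<^sub>R z)) = integral\<^sup>L lborel g / c^DIM(complex)"
    by (rule lborel_scale_integral[OF c gm])
  moreover have "(\<lambda>z. g (c *\<^sub>R z)) = (\<lambda>z. c^(2*M-2) * (indicator A z *\<^sub>R sigmaM M z))"
    using c by (auto simp: g_def cA_def indicator_scale_image sigmaM_scale)
  ultimately have "integral\<^sup>L lborel g = c^2 * integral\<^sup>L lborel (\<lambda>z. c^(2*M-2) * (indicator A z *\<^sub>R sigmaM M z))"
    using c by (simp add: field_simps)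
  also have "integral\<^sup>L lborel (\<lambda>z. c^(2*M-2) * (indicator A z *\<^sub>R sigmaM M z)) = c^(2*M-2) * integral\<^sup>L lborel (\<lambda>z. indicator A z *\<^sub>R sigmaM M z)"
    by (rule integral_mult_right_zero)
  finally have gi: "integral\<^sup>L lborel g = c^2 * (c^(2*M-2) * integral\<^sup>L lborel (\<lambda>z. indicator A z *\<^sub>R sigmaM M z))" .
  have pw: "c^2 * c^(2*M-2) = c^(2*M)"
  proof -
    have ex: "2*M = 2 + (2*M-2)" using M by simp
    show ?thesis by (subst ex) (simp only: power_add)
  qed
  have "integral\<^sup>L lborel g = c^(2*M) * integral\<^sup>L lborel (\<lambda>z. indicator A z *\<^sub>R sigmaM M z)"
    unfolding gi pw[symmetric] by (simp only: mult.assoc)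
  thus ?thesis
    unfolding mom_t0_def set_lebesgue_integral_def g_def cA_def by simp
qed

lemma mom_t_scale:
  assumes ac: "analytic_curve \<gamma>" and c: "c > 0" and M: "M \<ge> 1"
  shows "mom_t (UM M) (\<lambda>t. c *\<^sub>R \<gamma> t) k = complex_of_real (c^(2*M) / c^k) * mom_t (UM M) \<gamma> k"
proof -
  obtain \<delta> f where ap: "analytic_param \<delta> f \<gamma>" using ac by (auto simp: analytic_curve_def)
  define F where "F = (\<lambda>z::complex. inverse z ^ k * wirt_z (UM M) z)"
  have hom: "F (c *\<^sub>R z) * complex_of_real c = complex_of_real (c^(2*M) / c^k) * F z" for z
  proof -
    have e: "inverse c ^ k * c ^ (2 * M - 2) * c * c = c^(2*M) / c^k"
    proof -
      have ex: "2*M = Suc (Suc (2*M-2))" using M by simp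
      have "c^(2*M) = c^(Suc (Suc (2*M-2)))" using ex by metis
      hence "c ^ (2 * M - 2) * c * c = c^(2*M)" by (simp add: mult_ac)
      thus ?thesis by (simp add: divide_inverse mult.assoc mult.commute mult.left_commute power_inverse)
    qed
    have i: "inverse (c *\<^sub>R z) ^ k = complex_of_real (inverse c ^ k) * inverse z ^ k"
      by (simp add: scaleR_conv_of_real power_mult_distrib)
    have n: "norm (c *\<^sub>R z) ^ (2*M-2) = c^(2*M-2) * norm z ^ (2*M-2)"
      using c by (simp add: power_mult_distrib)
    have cj: "cnj (c *\<^sub>R z) = complex_of_real c * cnj z" by (simp add: scaleR_conv_of_real)
    have "F (c *\<^sub>R z) * complex_of_real c
        = complex_of_real (inverse c ^ k * c ^ (2 * M - 2) * c * c) * F z"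
      unfolding F_def wirt_UM[OF M] i n cj
      by (simp add: mult_ac)
    thus ?thesis unfolding e .
  qed
  have "contour_integral (\<lambda>t. c *\<^sub>R \<gamma> t) F = complex_of_real (c^(2*M) / c^k) * contour_integral \<gamma> F"
  proof (rule contour_integral_scale)
    show "c \<noteq> 0" "complex_of_real (c^(2*M) / c^k) \<noteq> 0" using c by auto
    show "\<And>t. t \<in> {0..1} \<Longrightarrow> \<gamma> differentiable (at t within {0..1})"
      by (rule analytic_param_diff[OF ap])
    show "\<And>z. F (c *\<^sub>R z) * complex_of_real c = complex_of_real (c^(2*M) / c^k) * F z" by (rule hom)
  qed
  thus ?thesis unfolding mom_t_def F_def by simp
qed

lemma annulus_bound:
  assumes "analytic_param \<delta> f \<gamma>"
  shows "\<exists>B>0. \<forall>z\<in>annulus_cl \<delta>. norm (f z) \<le> B"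
proof -
  have an: "f analytic_on annulus_cl \<delta>" using assms by (simp add: analytic_param_def)
  have "continuous_on (annulus_cl \<delta>) f"
    by (intro holomorphic_on_imp_continuous_on analytic_imp_holomorphic an)
  moreover have "compact (annulus_cl \<delta>)"
  proof -
    have b: "bounded (annulus_cl \<delta>)"
      by (rule bounded_subset[OF bounded_cball[of 0 "1+\<delta>"]]) (auto simp: annulus_cl_def)
    have "annulus_cl \<delta> = {z. 1 - \<delta> \<le> norm z} \<inter> {z. norm z \<le> 1 + \<delta>}"
      by (auto simp: annulus_cl_def)
    hence "closed (annulus_cl \<delta>)"
      by (simp add: closed_Int closed_Collect_le continuous_on_const continuous_on_norm_id)
    with b show ?thesis by (simp add: compact_eq_bounded_closed)
  qed
  ultimately have "compact (f ` annulus_cl \<delta>)" by (rule compact_continuous_image)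
  hence "bounded (f ` annulus_cl \<delta>)" by (rule compact_imp_bounded)
  thus ?thesis by (auto simp: bounded_pos)
qed

lemma G'_axis:
  fixes G' :: "real \<times> (complex ^ 'n::finite) \<Rightarrow> real"
  assumes lin: "linear G'"
  shows "complex_of_real (G' (0, axis i w)) = w * d_tk G' i + cnj w * d_tkbar G' i"
proof -
  have e: "(0::real, axis i w) = Re w *\<^sub>R (0, axis i 1) + Im w *\<^sub>R (0, axis i \<i>)"
  proof -
    have "axis i w = Re w *\<^sub>R axis i 1 + Im w *\<^sub>R axis i \<i>"
      by (simp add: vec_eq_iff axis_def complex_eq_iff)
    thus ?thesis by simp
  qed
  have "G' (0, axis i w) = Re w * G' (0, axis i 1) + Im w * G' (0, axis i \<i>)"
    unfolding e by (simp only: linear_add[OF lin] linear_scale[OF lin] real_scaleR_def)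
  thus ?thesis
    by (simp add: d_tk_def d_tkbar_def complex_eq_iff field_simps)
qed

lemma final_arith:
  fixes a b d :: real and X :: complex
  assumes "complex_of_real (a + b) = complex_of_real d + X"
  shows "complex_of_real a = complex_of_real (- b + d) + X"
  using assms by (simp add: algebra_simps)

theorem mainTheorem3:
  fixes M :: nat
    and idx :: "'n::finite \<Rightarrow> nat"
    and S :: "(real \<times> (complex ^ 'n)) set"
    and \<Phi> :: "real \<times> (complex ^ 'n) \<Rightarrow> real \<Rightarrow> complex"
    and c :: "real \<times> (complex ^ 'n)"
    and G' :: "real \<times> (complex ^ 'n) \<Rightarrow> real"
  assumes M_pos: "M \<ge> 1"
    and idx_inj: "inj idx"
    and idx_pos: "\<forall>i. 1 \<le> idx i"
    and S_open: "open S"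
    and c_in: "c \<in> S"
    and chart: "\<forall>d\<in>S. adm_curve (\<Phi> d) \<and> has_coords (sigmaM M) (UM M) idx (\<Phi> d) d"
    and local_coords:
      "\<forall>d\<in>S. \<exists>\<delta> \<epsilon> f. \<epsilon> > 0 \<and> analytic_param \<delta> f (\<Phi> d) \<and>
         (\<forall>e\<in>S. \<forall>\<gamma> g. adm_curve \<gamma> \<and> has_coords (sigmaM M) (UM M) idx \<gamma> e \<and>
            analytic_param \<delta> g \<gamma> \<and> (\<forall>z\<in>annulus_cl \<delta>. norm (g z - f z) < \<epsilon>)
            \<longrightarrow> Dplus \<gamma> = Dplus (\<Phi> e))"
    and F_diff: "((\<lambda>d. free_energy (sigmaM M) (Dplus (\<Phi> d))) has_derivative G') (at c)"
  shows "complex_of_real (4 * real M * free_energy (sigmaM M) (Dplus (\<Phi> c)))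
     = complex_of_real (- (fst c)\<^sup>2 + 2 * real M * fst c * d_t0 G')
       + (\<Sum>i\<in>UNIV. (2 * of_nat M - of_nat (idx i)) *
            (snd c $ i * d_tk G' i + cnj (snd c $ i) * d_tkbar G' i))"
proof -
  have adm0: "adm_curve (\<Phi> c)" and hc0: "has_coords (sigmaM M) (UM M) idx (\<Phi> c) c"
    using chart c_in by auto
  define \<gamma>0 where "\<gamma>0 = \<Phi> c"
  define D where "D = Dplus \<gamma>0"
  have Do: "open D" "bounded D" using adm_Dplus[OF adm0] by (auto simp: D_def \<gamma>0_def)
  have Db: "D \<in> sets borel" using Do by simp
  have ac0: "analytic_curve \<gamma>0" using adm0 by (simp add: adm_curve_def \<gamma>0_def)
  have adm0': "adm_curve \<gamma>0" using adm0 by (simp add: \<gamma>0_def)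
  have t0: "mom_t0 (sigmaM M) D = fst c" using hc0 by (simp add: has_coords_def D_def \<gamma>0_def)
  have tk: "\<And>i. mom_t (UM M) \<gamma>0 (idx i) = snd c $ i" using hc0 by (simp add: has_coords_def \<gamma>0_def)
  have tz: "\<And>k. 1 \<le> k \<Longrightarrow> k \<notin> range idx \<Longrightarrow> mom_t (UM M) \<gamma>0 k = 0"
    using hc0 by (simp add: has_coords_def \<gamma>0_def)
  have "\<exists>\<delta> \<epsilon> f. \<epsilon> > 0 \<and> analytic_param \<delta> f (\<Phi> c) \<and>
         (\<forall>e\<in>S. \<forall>\<gamma> g. adm_curve \<gamma> \<and> has_coords (sigmaM M) (UM M) idx \<gamma> e \<and>
            analytic_param \<delta> g \<gamma> \<and> (\<forall>z\<in>annulus_cl \<delta>. norm (g z - f z) < \<epsilon>)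
            \<longrightarrow> Dplus \<gamma> = Dplus (\<Phi> e))"
    using local_coords c_in by (rule bspec)
  then obtain \<delta> \<epsilon> f where \<epsilon>: "\<epsilon> > 0" and ap: "analytic_param \<delta> f \<gamma>0"
    and lc: "\<And>e \<gamma> g. e \<in> S \<Longrightarrow> adm_curve \<gamma> \<Longrightarrow> has_coords (sigmaM M) (UM M) idx \<gamma> e \<Longrightarrow>
            analytic_param \<delta> g \<gamma> \<Longrightarrow> (\<forall>z\<in>annulus_cl \<delta>. norm (g z - f z) < \<epsilon>)
            \<Longrightarrow> Dplus \<gamma> = Dplus (\<Phi> e)"
  proof -
    from \<open>\<exists>\<delta> \<epsilon> f. _\<close> obtain \<delta> \<epsilon> f where H1: "\<epsilon> > 0" and H2: "analytic_param \<delta> f (\<Phi> c)"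
      and H3: "\<forall>e\<in>S. \<forall>\<gamma> g. adm_curve \<gamma> \<and> has_coords (sigmaM M) (UM M) idx \<gamma> e \<and>
            analytic_param \<delta> g \<gamma> \<and> (\<forall>z\<in>annulus_cl \<delta>. norm (g z - f z) < \<epsilon>)
            \<longrightarrow> Dplus \<gamma> = Dplus (\<Phi> e)" by (elim exE conjE)
    have H3': "Dplus \<gamma> = Dplus (\<Phi> e)"
      if a: "e \<in> S" "adm_curve \<gamma>" "has_coords (sigmaM M) (UM M) idx \<gamma> e"
            "analytic_param \<delta> g \<gamma>" "\<forall>z\<in>annulus_cl \<delta>. norm (g z - f z) < \<epsilon>" for e \<gamma> g
    proof -
      from bspec[OF H3 a(1)] have "adm_curve \<gamma> \<and> has_coords (sigmaM M) (UM M) idx \<gamma> e \<and>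
            analytic_param \<delta> g \<gamma> \<and> (\<forall>z\<in>annulus_cl \<delta>. norm (g z - f z) < \<epsilon>)
            \<longrightarrow> Dplus \<gamma> = Dplus (\<Phi> e)" by (elim allE)
      moreover have "adm_curve \<gamma> \<and> has_coords (sigmaM M) (UM M) idx \<gamma> e \<and>
            analytic_param \<delta> g \<gamma> \<and> (\<forall>z\<in>annulus_cl \<delta>. norm (g z - f z) < \<epsilon>)"
        using a(2-5) by (intro conjI)
      ultimately show ?thesis by (rule mp)
    qed
    show ?thesis using that[OF H1 _ H3'] H2 by (simp add: \<gamma>0_def)
  qed
  obtain B where B: "B > 0" "\<And>z. z \<in> annulus_cl \<delta> \<Longrightarrow> norm (f z) \<le> B"
    using annulus_bound[OF ap] by blast
  define g where "g = (\<lambda>i (x::real). x^(2*M) / x^(idx i))"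
  define p where "p = (\<lambda>x::real. (x^(2*M) * fst c, \<Sum>i\<in>UNIV. g i x *\<^sub>R axis i (snd c $ i)))"
  define v where "v = (2 * real M * fst c, \<Sum>i\<in>UNIV. (2 * real M - real (idx i)) *\<^sub>R axis i (snd c $ i))"
  have sndp: "snd (p x) $ i = g i x *\<^sub>R (snd c $ i)" for x i
    unfolding p_def by (simp add: axis_def if_distrib cong: if_cong)
  have p1: "p 1 = c"
  proof -
    have "snd (p 1) = snd c" by (simp add: vec_eq_iff sndp g_def)
    moreover have "fst (p 1) = fst c" by (simp add: p_def)
    ultimately show ?thesis by (simp add: prod_eq_iff)
  qed
  have gd: "(g i has_real_derivative (2 * real M - real (idx i))) (at 1)" for i
    using DERIV_divide[OF DERIV_pow[where n="2*M" and x=1 and s=UNIV] DERIV_pow[where n="idx i" and x=1 and s=UNIV]] unfolding g_def by simp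
  have pd: "(p has_vector_derivative v) (at 1)"
    unfolding p_def v_def
  proof (rule has_vector_derivative_Pair)
    show "((\<lambda>x. x ^ (2 * M) * fst c) has_vector_derivative 2 * real M * fst c) (at 1)"
      using DERIV_cmult_right[OF DERIV_pow[where n="2*M" and x=1 and s=UNIV], of "fst c"]
      by (simp add: has_real_derivative_iff_has_vector_derivative)
    show "((\<lambda>x. \<Sum>i\<in>UNIV. g i x *\<^sub>R axis i (snd c $ i)) has_vector_derivative
          (\<Sum>i\<in>UNIV. (2 * real M - real (idx i)) *\<^sub>R axis i (snd c $ i))) (at 1)"
    proof (rule has_vector_derivative_sum)
      fix i :: 'n
      show "((\<lambda>x. g i x *\<^sub>R axis i (snd c $ i)) has_vector_derivative
            (2 * real M - real (idx i)) *\<^sub>R axis i (snd c $ i)) (at 1)"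
        using has_vector_derivative_scaleR[OF gd[of i] has_vector_derivative_const[of "axis i (snd c $ i)"]]
        by simp
    qed
  qed
  have "isCont p 1" using has_vector_derivative_continuous[OF pd] by simp
  hence "(p \<longlongrightarrow> p 1) (at 1)" by (simp add: isCont_def)
  hence "eventually (\<lambda>x. p x \<in> S) (at 1)"
    by (rule topological_tendstoD[OF _ S_open]) (simp add: p1 c_in)
  then obtain r where r: "r > 0" "\<And>x. x \<noteq> 1 \<Longrightarrow> dist x 1 < r \<Longrightarrow> p x \<in> S"
    unfolding eventually_at by auto
  define r' where "r' = min r (min (1/2) (\<epsilon> / B))"
  have r': "r' > 0" using r B \<epsilon> by (simp add: r'_def)
  define F0 where "F0 = free_energy (sigmaM M) D"
  have key: "free_energy (sigmaM M) (Dplus (\<Phi> (p x))) = x^(4*M) * (F0 + ln x * (fst c)^2)"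
    if x: "x \<in> ball 1 r'" for x
  proof -
    have dx: "dist x 1 < r'" using x by (simp add: dist_commute)
    have "\<bar>x - 1\<bar> < 1/2" using dx by (simp add: r'_def dist_real_def)
    hence x0: "x > 0" by linarith
    have pS: "p x \<in> S" using r dx c_in p1 by (cases "x = 1") (auto simp: r'_def)
    define \<gamma>x where "\<gamma>x = (\<lambda>t. x *\<^sub>R \<gamma>0 t)"
    have admx: "adm_curve \<gamma>x" unfolding \<gamma>x_def by (rule adm_curve_scale[OF adm0' x0])
    have Dx: "Dplus \<gamma>x = (\<lambda>z. x *\<^sub>R z) ` D" unfolding \<gamma>x_def D_def using x0 by (simp add: Dplus_scale)
    have hcx: "has_coords (sigmaM M) (UM M) idx \<gamma>x (p x)"
      unfolding has_coords_def
    proof (intro conjI allI impI)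
      show "mom_t0 (sigmaM M) (Dplus \<gamma>x) = fst (p x)"
        unfolding Dx using mom_t0_scale[OF Db x0 M_pos] t0 by (simp add: p_def)
      show "mom_t (UM M) \<gamma>x (idx i) = snd (p x) $ i" for i
        unfolding \<gamma>x_def mom_t_scale[OF ac0 x0 M_pos] sndp tk by (simp only: g_def scaleR_conv_of_real)
      show "mom_t (UM M) \<gamma>x k = 0" if "1 \<le> k" "k \<notin> range idx" for k
        unfolding \<gamma>x_def mom_t_scale[OF ac0 x0 M_pos] using tz[OF that] by simp
    qed
    have apx: "analytic_param \<delta> (\<lambda>z. x *\<^sub>R f z) \<gamma>x"
      unfolding \<gamma>x_def by (rule analytic_param_scale[OF ap]) (use x0 in simp)
    have close: "\<forall>z\<in>annulus_cl \<delta>. norm (x *\<^sub>R f z - f z) < \<epsilon>"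
    proof
      fix z assume z: "z \<in> annulus_cl \<delta>"
      have "x *\<^sub>R f z - f z = (x - 1) *\<^sub>R f z" by (simp add: scaleR_diff_left)
      hence "norm (x *\<^sub>R f z - f z) = \<bar>x - 1\<bar> * norm (f z)" by simp
      also have "\<dots> \<le> \<bar>x - 1\<bar> * B" using B(2)[OF z] by (intro mult_left_mono) auto
      also have "\<bar>x - 1\<bar> < \<epsilon> / B" using dx by (auto simp: r'_def dist_real_def)
      hence "\<bar>x - 1\<bar> * B < \<epsilon>" using B(1) by (simp add: field_simps)
      finally show "norm (x *\<^sub>R f z - f z) < \<epsilon>" .
    qed
    have "Dplus \<gamma>x = Dplus (\<Phi> (p x))" by (rule lc[OF pS admx hcx apx close])
    hence "Dplus (\<Phi> (p x)) = (\<lambda>z. x *\<^sub>R z) ` D" using Dx by simp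
    thus ?thesis using FE_scale[OF Do x0 M_pos] t0 by (simp add: F0_def)
  qed
  have phid: "((\<lambda>x. x^(4*M) * (F0 + ln x * (fst c)^2)) has_real_derivative (4 * real M * F0 + (fst c)^2)) (at 1)"
  proof -
    have da: "((\<lambda>x. x^(4*M)) has_real_derivative real (4*M) * 1^(4*M-Suc 0)) (at 1)" by (rule DERIV_pow)
    have db: "((\<lambda>x. F0 + ln x * (fst c)^2) has_real_derivative (0 + inverse 1 * (fst c)^2)) (at 1)"
      by (intro DERIV_add DERIV_const DERIV_cmult_right DERIV_ln) simp
    show ?thesis using DERIV_mult[OF da db] by simp
  qed
  have d1: "((\<lambda>x. free_energy (sigmaM M) (Dplus (\<Phi> (p x)))) has_real_derivative (4 * real M * F0 + (fst c)^2)) (at 1)"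
    by (rule has_field_derivative_transform_within_open[OF phid, of "ball 1 r'"]) (use r' key in auto)
  have lin: "linear G'" using F_diff by (rule has_derivative_linear)
  have Fd: "((\<lambda>d. free_energy (sigmaM M) (Dplus (\<Phi> d))) has_derivative G') (at (p 1))"
    using F_diff p1 by simp
  have pd': "(p has_derivative (\<lambda>h. h *\<^sub>R v)) (at 1)" using pd by (simp add: has_vector_derivative_def)
  have "((\<lambda>x. free_energy (sigmaM M) (Dplus (\<Phi> (p x)))) has_derivative (\<lambda>h. G' (h *\<^sub>R v))) (at 1)"
    by (rule has_derivative_compose[OF pd' Fd])
  moreover have "(\<lambda>h. G' (h *\<^sub>R v)) = (*) (G' v)"
    by (rule ext) (simp add: linear_scale[OF lin])
  ultimately have d2: "((\<lambda>x. free_energy (sigmaM M) (Dplus (\<Phi> (p x)))) has_real_derivative G' v) (at 1)"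
    by (simp add: has_field_derivative_def)
  have Gv: "G' v = 4 * real M * F0 + (fst c)^2" using DERIV_unique[OF d2 d1] .
  have vdec: "v = (2 * real M * fst c) *\<^sub>R (1, 0) + (\<Sum>i\<in>UNIV. (2 * real M - real (idx i)) *\<^sub>R (0, axis i (snd c $ i)))"
    unfolding v_def by (simp add: prod_eq_iff fst_sum snd_sum)
  have "G' v = (2 * real M * fst c) * d_t0 G' + (\<Sum>i\<in>UNIV. (2 * real M - real (idx i)) * G' (0, axis i (snd c $ i)))"
    unfolding vdec d_t0_def by (simp only: linear_add[OF lin] linear_sum[OF lin] linear_scale[OF lin] o_def real_scaleR_def)
  hence "complex_of_real (G' v) = complex_of_real (2 * real M * fst c * d_t0 G')
      + (\<Sum>i\<in>UNIV. complex_of_real (2 * real M - real (idx i)) * complex_of_real (G' (0, axis i (snd c $ i))))"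
    by simp
  also have "\<dots> = complex_of_real (2 * real M * fst c * d_t0 G')
      + (\<Sum>i\<in>UNIV. (2 * of_nat M - of_nat (idx i)) * (snd c $ i * d_tk G' i + cnj (snd c $ i) * d_tkbar G' i))"
    by (rule arg_cong[where f="\<lambda>s. complex_of_real (2 * real M * fst c * d_t0 G') + s"], rule sum.cong[OF refl])
       (simp add: G'_axis[OF lin])
  finally have "complex_of_real (4 * real M * F0 + (fst c)^2) = complex_of_real (2 * real M * fst c * d_t0 G')
      + (\<Sum>i\<in>UNIV. (2 * of_nat M - of_nat (idx i)) * (snd c $ i * d_tk G' i + cnj (snd c $ i) * d_tkbar G' i))"
    unfolding Gv .
  thus ?thesis unfolding F0_def D_def \<gamma>0_def by (rule final_arith)
qed

end
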